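(* Consider the network with vertices $s_1,s_2,s_3,t$ and directed edges $(s_3,s_1),(s_3,s_2),(s_1,t),(s_2,t)$, messages $X_1^k,X_2^k,X_3^k$ with all $3k$ components i.i.d. uniform on a finite alphabet $\mathcal{A}$ ($|\mathcal{A}|>1$), and a demand function $f:\mathcal{A}^3\to\mathcal{B}$ applied componentwise. Let $\mathcal{C}_{f,k}$ be a source-network code that computes $f(X_1^k,X_2^k,X_3^k)$ at $t$ with zero error, and let $\mathbf{a}_3\in\mathcal{A}^k$ be a realization of $X_3^k$. Then for $u\in\{1,2\}$, the number of distinct $\mathbf{Z}_u$-labels that must be transmitted on the edge $(s_u,t)$ (i.e. the number of distinct values of $\mathbf{Z}_u$ over all $X_u^k\in\mathcal{A}^k$ with $X_3^k=\mathbf{a}_3$) is at least $V_u(\mathbf{a}_3)\triangleq\prod_{i=1}^k V_u(a_3^{(i)})$. Moreover, if $\mathbf{x}_1\not\equiv^{\mathbf{a}_3}\mathbf{y}_1|_1$, then $\phi_{(s_1,t)}(\mathbf{x}_1,\phi_{(s_3,s_1)}(\mathbf{a}_3))\neq\phi_{(s_1,t)}(\mathbf{y}_1,\phi_{(s_3,s_1)}(\mathbf{a}_3))$, and analogously, if $\mathbf{x}_2\not\equiv^{\mathbf{a}_3}\mathbf{y}_2|_2$, then $\phi_{(s_2,t)}(\mathbf{x}_2,\phi_{(s_3,s_2)}(\mathbf{a}_3))\neq\phi_{(s_2,t)}(\mathbf{y}_2,\phi_{(s_3,s_2)}(\mathbf{a}_3))$.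
   Context: A source-network code $\mathcal{C}_{f,k}$ consists of encoders $\phi_{(s_3,s_1)},\phi_{(s_3,s_2)}:\mathcal{A}^k\to\mathcal{Z}^*$, $\phi_{(s_1,t)},\phi_{(s_2,t)}:\mathcal{A}^k\times\mathcal{Z}^*\to\mathcal{Z}^*$ (where $\mathcal{Z}^*$ is the set of finite sequences over a finite alphabet $\mathcal{Z}$, $|\mathcal{Z}|>1$) and a decoder $\psi_t:\mathcal{Z}^*\times\mathcal{Z}^*\to\mathcal{B}^k$, with $\mathbf{Z}_1=\phi_{(s_1,t)}(X_1^k,\phi_{(s_3,s_1)}(X_3^k))$, $\mathbf{Z}_2=\phi_{(s_2,t)}(X_2^k,\phi_{(s_3,s_2)}(X_3^k))$ and zero error meaning $\Pr\{\psi_t(\mathbf{Z}_1,\mathbf{Z}_2)\ne f(X_1^k,X_2^k,X_3^k)\}=0$. For $a_3\in\mathcal{A}$ and $x,y\in\mathcal{A}$: $x\equiv^{a_3}y|_1$ iff $f(x,z,a_3)=f(y,z,a_3)$ for all $z\in\mathcal{A}$; $x\equiv^{a_3}y|_2$ iff $f(z,x,a_3)=f(z,y,a_3)$ for all $z\in\mathcal{A}$. These are equivalence relations on $\mathcal{A}$, and $V_u(a_3)$ denotes the number of equivalence classes of $\equiv^{a_3}|_u$. For vectors $\mathbf{x}_u,\mathbf{y}_u,\mathbf{a}_3\in\mathcal{A}^k$: $\mathbf{x}_u\equiv^{\mathbf{a}_3}\mathbf{y}_u|_u$ iff $x_u^{(j)}\equiv^{a_3^{(j)}}y_u^{(j)}|_u$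 for all $j=1,\ldots,k$. *)

theory Defs
  imports "HOL-Probability.Probability"
begin

text \<open>Vectors in A^k are lists of length k; Z^* is the type of lists over 'z.\<close>

definition vecs :: "nat \<Rightarrow> 'a list set" where
  "vecs k = {xs. length xs = k}"

definition fvec :: "('a \<Rightarrow> 'a \<Rightarrow> 'a \<Rightarrow> 'b) \<Rightarrow> 'a list \<Rightarrow> 'a list \<Rightarrow> 'a list \<Rightarrow> 'b list" where
  "fvec f x1 x2 x3 = map (\<lambda>i. f (x1 ! i) (x2 ! i) (x3 ! i)) [0..<length x3]"

text \<open>Messages (X1^k, X2^k, X3^k): all 3k components i.i.d. uniform on the alphabet,
  i.e. the uniform distribution on (A^k)^3.\<close>
definition msg_dist :: "nat \<Rightarrow> ('a::finite list \<times> 'a list \<times> 'a list) pmf" where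
  "msg_dist k = pmf_of_set (vecs k \<times> vecs k \<times> vecs k)"

definition zero_error ::
  "('a::finite \<Rightarrow> 'a \<Rightarrow> 'a \<Rightarrow> 'b) \<Rightarrow> nat
   \<Rightarrow> ('a list \<Rightarrow> 'z list) \<Rightarrow> ('a list \<Rightarrow> 'z list)
   \<Rightarrow> ('a list \<Rightarrow> 'z list \<Rightarrow> 'z list) \<Rightarrow> ('a list \<Rightarrow> 'z list \<Rightarrow> 'z list)
   \<Rightarrow> ('z list \<Rightarrow> 'z list \<Rightarrow> 'b list) \<Rightarrow> bool" where
  "zero_error f k phi31 phi32 phi1t phi2t psi \<longleftrightarrow>
     measure_pmf.prob (msg_dist k)
       {(x1, x2, x3). psi (phi1t x1 (phi31 x3)) (phi2t x2 (phi32 x3)) \<noteq> fvec f x1 x2 x3} = 0"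

definition equiv1 :: "('a \<Rightarrow> 'a \<Rightarrow> 'a \<Rightarrow> 'b) \<Rightarrow> 'a \<Rightarrow> 'a \<Rightarrow> 'a \<Rightarrow> bool" where
  "equiv1 f a3 x y \<longleftrightarrow> (\<forall>z. f x z a3 = f y z a3)"

definition equiv2 :: "('a \<Rightarrow> 'a \<Rightarrow> 'a \<Rightarrow> 'b) \<Rightarrow> 'a \<Rightarrow> 'a \<Rightarrow> 'a \<Rightarrow> bool" where
  "equiv2 f a3 x y \<longleftrightarrow> (\<forall>z. f z x a3 = f z y a3)"

definition V1 :: "('a \<Rightarrow> 'a \<Rightarrow> 'a \<Rightarrow> 'b) \<Rightarrow> 'a \<Rightarrow> nat" where
  "V1 f a3 = card (UNIV // {(x, y). equiv1 f a3 x y})"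

definition V2 :: "('a \<Rightarrow> 'a \<Rightarrow> 'a \<Rightarrow> 'b) \<Rightarrow> 'a \<Rightarrow> nat" where
  "V2 f a3 = card (UNIV // {(x, y). equiv2 f a3 x y})"

definition vequiv1 :: "('a \<Rightarrow> 'a \<Rightarrow> 'a \<Rightarrow> 'b) \<Rightarrow> 'a list \<Rightarrow> 'a list \<Rightarrow> 'a list \<Rightarrow> bool" where
  "vequiv1 f a3 x y \<longleftrightarrow> (\<forall>j < length a3. equiv1 f (a3 ! j) (x ! j) (y ! j))"

definition vequiv2 :: "('a \<Rightarrow> 'a \<Rightarrow> 'a \<Rightarrow> 'b) \<Rightarrow> 'a list \<Rightarrow> 'a list \<Rightarrow> 'a list \<Rightarrow> bool" where
  "vequiv2 f a3 x y \<longleftrightarrow> (\<forall>j < length a3. equiv2 f (a3 ! j) (x ! j) (y ! j))"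

end

theory Submission
  imports Defs
begin

lemma finite_vecs: "finite (vecs k :: 'a::finite list set)"
proof -
  have "vecs k = {xs :: 'a list. set xs \<subseteq> UNIV \<and> length xs = k}" by (auto simp: vecs_def)
  then show ?thesis using finite_lists_length_eq[of "UNIV :: 'a set" k] by simp
qed

lemma vecs_ne: "vecs k \<noteq> {}"
  by (auto simp: vecs_def intro!: exI[of _ "replicate k undefined"])

lemma zero_error_all:
  fixes f :: "'a::finite \<Rightarrow> 'a \<Rightarrow> 'a \<Rightarrow> 'b"
  assumes "zero_error f k phi31 phi32 phi1t phi2t psi"
    and "x1 \<in> vecs k" "x2 \<in> vecs k" "x3 \<in> vecs k"
  shows "psi (phi1t x1 (phi31 x3)) (phi2t x2 (phi32 x3)) = fvec f x1 x2 x3"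
proof (rule ccontr)
  assume ne: "\<not> ?thesis"
  let ?S = "(vecs k :: 'a list set) \<times> (vecs k :: 'a list set) \<times> (vecs k :: 'a list set)"
  have fin: "finite ?S" using finite_vecs by auto
  have nem: "?S \<noteq> {}" using vecs_ne by auto
  have "set_pmf (msg_dist k) = ?S" unfolding msg_dist_def using fin nem by simp
  moreover have "set_pmf (msg_dist k) \<inter>
      {(x1, x2, x3). psi (phi1t x1 (phi31 x3)) (phi2t x2 (phi32 x3)) \<noteq> fvec f x1 x2 x3} = {}"
    using assms(1) unfolding zero_error_def by (simp add: measure_pmf_zero_iff)
  ultimately show False using ne assms(2-4) by auto
qed

lemma card_bound:
  fixes R :: "nat \<Rightarrow> ('a::finite \<times> 'a) set" and phi :: "'a list \<Rightarrow> 'c"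
  assumes eq: "\<And>i. i < k \<Longrightarrow> equiv UNIV (R i)"
    and rel: "\<And>x y. x \<in> vecs k \<Longrightarrow> y \<in> vecs k \<Longrightarrow> phi x = phi y \<Longrightarrow> \<forall>j<k. (x!j, y!j) \<in> R j"
  shows "(\<Prod>i<k. card (UNIV // R i)) \<le> card (phi ` vecs k)"
proof -
  define g where "g x = (\<lambda>i\<in>{..<k}. R i `` {x!i})" for x
  define G where "G z = g (SOME x. x \<in> vecs k \<and> phi x = z)" for z
  have sub1: "PiE {..<k} (\<lambda>i. UNIV // R i) \<subseteq> g ` vecs k"
  proof
    fix h assume h: "h \<in> PiE {..<k} (\<lambda>i. UNIV // R i)"
    define x where "x = map (\<lambda>i. SOME a. a \<in> h i) [0..<k]"
    have xv: "x \<in> vecs k" by (simp add: x_def vecs_def)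
    have "g x = h"
    proof
      fix i show "g x i = h i"
      proof (cases "i < k")
        case True
        then have hi: "h i \<in> UNIV // R i" using h by auto
        then obtain b where b: "h i = R i `` {b}" by (auto elim: quotientE)
        have "b \<in> h i" using b eq[OF True] by (auto simp: equiv_def refl_on_def)
        then have "(SOME a. a \<in> h i) \<in> h i" by (rule someI)
        then have "(b, x!i) \<in> R i" using b True by (simp add: x_def)
        then have "R i `` {x!i} = h i" using b eq[OF True] by (simp add: equiv_class_eq_iff)
        then show ?thesis using True by (simp add: g_def)
      next
        case False then show ?thesis using h by (auto simp: g_def PiE_def extensional_def)
      qed
    qed
    then show "h \<in> g ` vecs k" using xv by blast
  qed
  have sub2: "g ` vecs k \<subseteq> G ` (phi ` vecs k)"
  proof
    fix w assume "w \<in> g ` vecs k"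
    then obtain x where x: "x \<in> vecs k" "w = g x" by auto
    have "\<exists>y. y \<in> vecs k \<and> phi y = phi x" using x by blast
    then have s: "(SOME y. y \<in> vecs k \<and> phi y = phi x) \<in> vecs k \<and>
        phi (SOME y. y \<in> vecs k \<and> phi y = phi x) = phi x" by (rule someI_ex)
    define y where "y = (SOME y. y \<in> vecs k \<and> phi y = phi x)"
    have y: "y \<in> vecs k" "phi y = phi x" using s by (auto simp: y_def)
    have "\<forall>j<k. (y!j, x!j) \<in> R j" using rel[OF y(1) x(1) y(2)] .
    then have "g y = g x" unfolding g_def
      by (intro restrict_ext) (metis eq equiv_class_eq_iff lessThan_iff)
    then have "G (phi x) = w" using x by (simp add: G_def y_def)
    then show "w \<in> G ` (phi ` vecs k)" using x by blast
  qed
  have fin: "finite (phi ` vecs k)" using finite_vecs by auto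
  have "(\<Prod>i<k. card (UNIV // R i)) = card (PiE {..<k} (\<lambda>i. UNIV // R i))"
    by (simp add: card_PiE)
  also have "\<dots> \<le> card (g ` vecs k)"
    by (rule card_mono[OF _ sub1]) (simp add: finite_vecs)
  also have "\<dots> \<le> card (G ` (phi ` vecs k))"
    by (rule card_mono[OF _ sub2]) (simp add: fin)
  also have "\<dots> \<le> card (phi ` vecs k)" by (rule card_image_le[OF fin])
  finally show ?thesis .
qed

theorem lemma4:
  fixes f :: "'a::finite \<Rightarrow> 'a \<Rightarrow> 'a \<Rightarrow> 'b"
    and k :: nat
    and phi31 phi32 :: "'a list \<Rightarrow> 'z::finite list"
    and phi1t phi2t :: "'a list \<Rightarrow> 'z list \<Rightarrow> 'z list"
    and psi :: "'z list \<Rightarrow> 'z list \<Rightarrow> 'b list"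
    and a3 :: "'a list"
  assumes "CARD('a) > 1"
    and "CARD('z) > 1"
    and "zero_error f k phi31 phi32 phi1t phi2t psi"
    and "a3 \<in> vecs k"
  shows "card ((\<lambda>x1. phi1t x1 (phi31 a3)) ` vecs k) \<ge> (\<Prod>i<k. V1 f (a3 ! i))
    \<and> card ((\<lambda>x2. phi2t x2 (phi32 a3)) ` vecs k) \<ge> (\<Prod>i<k. V2 f (a3 ! i))
    \<and> (\<forall>x1 \<in> vecs k. \<forall>y1 \<in> vecs k. \<not> vequiv1 f a3 x1 y1 \<longrightarrow>
           phi1t x1 (phi31 a3) \<noteq> phi1t y1 (phi31 a3))
    \<and> (\<forall>x2 \<in> vecs k. \<forall>y2 \<in> vecs k. \<not> vequiv2 f a3 x2 y2 \<longrightarrow>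
           phi2t x2 (phi32 a3) \<noteq> phi2t y2 (phi32 a3))"
proof -
  have len: "length a3 = k" using assms(4) by (simp add: vecs_def)
  have P1: "\<forall>x1 \<in> vecs k. \<forall>y1 \<in> vecs k. \<not> vequiv1 f a3 x1 y1 \<longrightarrow>
           phi1t x1 (phi31 a3) \<noteq> phi1t y1 (phi31 a3)"
  proof (intro ballI impI notI)
    fix x1 y1 assume x: "x1 \<in> vecs k" and y: "y1 \<in> vecs k" and nv: "\<not> vequiv1 f a3 x1 y1"
      and e: "phi1t x1 (phi31 a3) = phi1t y1 (phi31 a3)"
    from nv obtain j z where j: "j < k" and fz: "f (x1!j) z (a3!j) \<noteq> f (y1!j) z (a3!j)"
      using len by (auto simp: vequiv1_def equiv1_def)
    have z: "replicate k z \<in> vecs k" by (simp add: vecs_def)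
    have "fvec f x1 (replicate k z) a3 = fvec f y1 (replicate k z) a3"
      using zero_error_all[OF assms(3) x z assms(4)] zero_error_all[OF assms(3) y z assms(4)] e
      by simp
    then have "fvec f x1 (replicate k z) a3 ! j = fvec f y1 (replicate k z) a3 ! j" by simp
    then show False using fz j len by (simp add: fvec_def)
  qed
  have P2: "\<forall>x2 \<in> vecs k. \<forall>y2 \<in> vecs k. \<not> vequiv2 f a3 x2 y2 \<longrightarrow>
           phi2t x2 (phi32 a3) \<noteq> phi2t y2 (phi32 a3)"
  proof (intro ballI impI notI)
    fix x2 y2 assume x: "x2 \<in> vecs k" and y: "y2 \<in> vecs k" and nv: "\<not> vequiv2 f a3 x2 y2"
      and e: "phi2t x2 (phi32 a3) = phi2t y2 (phi32 a3)"
    from nv obtain j z where j: "j < k" and fz: "f z (x2!j) (a3!j) \<noteq> f z (y2!j) (a3!j)"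
      using len by (auto simp: vequiv2_def equiv2_def)
    have z: "replicate k z \<in> vecs k" by (simp add: vecs_def)
    have "fvec f (replicate k z) x2 a3 = fvec f (replicate k z) y2 a3"
      using zero_error_all[OF assms(3) z x assms(4)] zero_error_all[OF assms(3) z y assms(4)] e
      by simp
    then have "fvec f (replicate k z) x2 a3 ! j = fvec f (replicate k z) y2 a3 ! j" by simp
    then show False using fz j len by (simp add: fvec_def)
  qed
  have C1: "(\<Prod>i<k. V1 f (a3 ! i)) \<le> card ((\<lambda>x1. phi1t x1 (phi31 a3)) ` vecs k)"
    unfolding V1_def
  proof (rule card_bound)
    fix i show "equiv UNIV {(x, y). equiv1 f (a3 ! i) x y}"
      by (auto simp: equiv_def refl_on_def sym_def trans_def equiv1_def)
  next
    fix x y assume "x \<in> vecs k" "y \<in> vecs k" "phi1t x (phi31 a3) = phi1t y (phi31 a3)"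
    then show "\<forall>j<k. (x ! j, y ! j) \<in> {(x, y). equiv1 f (a3 ! j) x y}"
      using P1 len by (auto simp: vequiv1_def)
  qed
  have C2: "(\<Prod>i<k. V2 f (a3 ! i)) \<le> card ((\<lambda>x2. phi2t x2 (phi32 a3)) ` vecs k)"
    unfolding V2_def
  proof (rule card_bound)
    fix i show "equiv UNIV {(x, y). equiv2 f (a3 ! i) x y}"
      by (auto simp: equiv_def refl_on_def sym_def trans_def equiv2_def)
  next
    fix x y assume "x \<in> vecs k" "y \<in> vecs k" "phi2t x (phi32 a3) = phi2t y (phi32 a3)"
    then show "\<forall>j<k. (x ! j, y ! j) \<in> {(x, y). equiv2 f (a3 ! j) x y}"
      using P2 len by (auto simp: vequiv2_def)
  qed
  show ?thesis using C1 C2 P1 P2 by blast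
qed

end
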